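(* For every $\mathbf{h},\mathbf{k}\in\mathbb{N}^n$, letting $t:=|\mathbf{h}+\mathbf{k}|=\deg(\mathbf{x}^{\mathbf{h}}(1-\mathbf{x})^{\mathbf{k}})$, one has $1-\mathbf{x}^{\mathbf{h}}(1-\mathbf{x})^{\mathbf{k}}+C'_t\in M_{2\lceil t/2\rceil}(g_1,\dots,g_n)$, where $g_i:=x_i(1-x_i)$.
   Context: $\mathbf{x}=(x_1,\dots,x_n)$, $\mathbf{x}^{\mathbf{h}}(1-\mathbf{x})^{\mathbf{k}}:=\prod_{i=1}^n x_i^{h_i}(1-x_i)^{k_i}$, $|\mathbf{a}|=\sum_i a_i$. $\Sigma[\mathbf{x}]$ denotes sums of squares of real polynomials; the $r$-truncated quadratic module is $M_r(g_1,\dots,g_n):=\{\sigma_0+\sum_{i=1}^n\sigma_i g_i:\ \sigma_i\in\Sigma[\mathbf{x}],\ \deg\sigma_0\le r,\ \deg(\sigma_i g_i)\le r\}$. For each positive integer $j$, $C_j\le 1$ denotes a constant such that $\prod_{i=1}^j x_i+C_j\in M_{2\lceil j/2\rceil}(g_1,\dots,g_j)$ (in the $j$ variables $x_1,\dots,x_j$), with $C_1:=0$; such constants exist. Then $C'_t:=\sum_{j=1}^t C_j$. *)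

theory Defs
  imports Complex_Main "HOL-Library.Poly_Mapping"
begin

text \<open>Real multivariate polynomials in variables x_i (i :: nat), represented as
  finitely supported maps from monomials (exponent vectors) to real coefficients.\<close>

type_synonym mpoly = "(nat \<Rightarrow>\<^sub>0 nat) \<Rightarrow>\<^sub>0 real"

definition Var :: "nat \<Rightarrow> mpoly" where
  "Var i = Poly_Mapping.single (Poly_Mapping.single i 1) 1"

definition Const :: "real \<Rightarrow> mpoly" where
  "Const c = Poly_Mapping.single 0 c"

text \<open>Total degree of a monomial and of a polynomial (degree of 0 is 0).\<close>
definition mdeg :: "(nat \<Rightarrow>\<^sub>0 nat) \<Rightarrow> nat" where
  "mdeg m = (\<Sum>i\<in>Poly_Mapping.keys m. Poly_Mapping.lookup m i)"

definition tdeg :: "mpoly \<Rightarrow> nat" where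
  "tdeg p = Max (insert 0 (mdeg ` Poly_Mapping.keys p))"

definition vars :: "mpoly \<Rightarrow> nat set" where
  "vars p = \<Union> (Poly_Mapping.keys ` Poly_Mapping.keys p)"

definition sos :: "nat set \<Rightarrow> mpoly set" where
  "sos V = {p. \<exists>qs. p = sum_list (map (\<lambda>q. q * q) qs) \<and> (\<forall>q\<in>set qs. vars q \<subseteq> V)}"

definition qmod :: "nat set \<Rightarrow> (nat \<Rightarrow> mpoly) \<Rightarrow> nat \<Rightarrow> mpoly set" where
  "qmod I g r = {p. \<exists>\<sigma>0 \<sigma>. \<sigma>0 \<in> sos I \<and> (\<forall>i\<in>I. \<sigma> i \<in> sos I)
      \<and> tdeg \<sigma>0 \<le> r \<and> (\<forall>i\<in>I. tdeg (\<sigma> i * g i) \<le> r)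
      \<and> p = \<sigma>0 + (\<Sum>i\<in>I. \<sigma> i * g i)}"

definition gbox :: "nat \<Rightarrow> mpoly" where
  "gbox i = Var i * (1 - Var i)"

end

theory Submission
  imports Defs
begin


lemma Const_add: "Const (a + b) = Const a + Const b"
  by (simp add: Const_def single_add)
lemma Const_mult: "Const a * Const b = Const (a * b)"
  by (simp add: Const_def mult_single)
lemma Const_0[simp]: "Const 0 = 0" by (simp add: Const_def)
lemma Const_1[simp]: "Const 1 = 1" by (simp add: Const_def)

lemma mdeg_superset: "finite S \<Longrightarrow> Poly_Mapping.keys m \<subseteq> S \<Longrightarrow> mdeg m = (\<Sum>i\<in>S. Poly_Mapping.lookup m i)"
  unfolding mdeg_def by (rule sum.mono_neutral_left) (auto simp: in_keys_iff)

lemma mdeg_add: "mdeg (a + b) = mdeg a + mdeg b"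
proof -
  let ?S = "Poly_Mapping.keys a \<union> Poly_Mapping.keys b"
  have "mdeg (a+b) = (\<Sum>i\<in>?S. Poly_Mapping.lookup (a+b) i)"
    by (rule mdeg_superset) (auto dest: keys_add[THEN subsetD])
  also have "\<dots> = (\<Sum>i\<in>?S. Poly_Mapping.lookup a i) + (\<Sum>i\<in>?S. Poly_Mapping.lookup b i)"
    by (simp add: lookup_add sum.distrib)
  also have "\<dots> = mdeg a + mdeg b"
  proof -
    have "mdeg a = (\<Sum>i\<in>?S. Poly_Mapping.lookup a i)" by (rule mdeg_superset) auto
    moreover have "mdeg b = (\<Sum>i\<in>?S. Poly_Mapping.lookup b i)" by (rule mdeg_superset) auto
    ultimately show ?thesis by (simp only:)
  qed
  finally show ?thesis .
qed

definition dle :: "mpoly \<Rightarrow> nat \<Rightarrow> bool" where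
  "dle p r \<longleftrightarrow> (\<forall>m\<in>Poly_Mapping.keys p. mdeg m \<le> r)"

lemma tdeg_le_iff: "tdeg p \<le> r \<longleftrightarrow> dle p r"
  unfolding tdeg_def dle_def by auto

lemma dle_mono: "dle p r \<Longrightarrow> r \<le> s \<Longrightarrow> dle p s"
  unfolding dle_def by force
lemma dle_add: "dle p r \<Longrightarrow> dle q r \<Longrightarrow> dle (p + q) r"
  unfolding dle_def using keys_add[of p q] by blast
lemma dle_uminus: "dle p r \<Longrightarrow> dle (- p) r"
  unfolding dle_def by simp
lemma dle_diff: "dle p r \<Longrightarrow> dle q r \<Longrightarrow> dle (p - q) r"
  unfolding dle_def using keys_diff[of p q] by blast
lemma dle_0[simp]: "dle 0 r" unfolding dle_def by simp
lemma dle_Const[simp]: "dle (Const c) r" unfolding dle_def Const_def by (simp add: mdeg_def)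
lemma dle_1[simp]: "dle 1 r" using dle_Const[of 1 r] by simp
lemma dle_Var: "dle (Var i) 1" unfolding dle_def Var_def by (simp add: mdeg_def)
lemma dle_mult: "dle p r \<Longrightarrow> dle q s \<Longrightarrow> dle (p * q) (r + s)"
  unfolding dle_def using keys_mult[of p q] by (force simp: mdeg_add)
lemma dle_sum: "(\<And>i. i \<in> S \<Longrightarrow> dle (F i) r) \<Longrightarrow> dle (sum F S) r"
  by (induction S rule: infinite_finite_induct) (auto intro: dle_add)
lemma dle_prod: "(\<And>i. i \<in> S \<Longrightarrow> dle (F i) (d i)) \<Longrightarrow> dle (prod F S) (sum d S)"
  by (induction S rule: infinite_finite_induct) (auto intro: dle_mult)
lemma dle_power: "dle p r \<Longrightarrow> dle (p ^ k) (k * r)"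
proof (induction k)
  case (Suc k)
  from dle_mult[OF Suc.prems Suc.IH[OF Suc.prems]] show ?case by simp
qed simp

definition vle :: "mpoly \<Rightarrow> nat set \<Rightarrow> bool" where
  "vle p V \<longleftrightarrow> vars p \<subseteq> V"

lemma keys_madd: "Poly_Mapping.keys (a + b :: nat \<Rightarrow>\<^sub>0 nat) \<subseteq> Poly_Mapping.keys a \<union> Poly_Mapping.keys b"
  by (rule keys_add)

lemma vle_add: "vle p V \<Longrightarrow> vle q V \<Longrightarrow> vle (p + q) V"
  unfolding vle_def vars_def using keys_add[of p q] by blast
lemma vle_uminus: "vle p V \<Longrightarrow> vle (- p) V"
  unfolding vle_def vars_def by simp
lemma vle_diff: "vle p V \<Longrightarrow> vle q V \<Longrightarrow> vle (p - q) V"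
  unfolding vle_def vars_def using keys_diff[of p q] by blast
lemma vle_0[simp]: "vle 0 V" unfolding vle_def vars_def by simp
lemma vle_Const[simp]: "vle (Const c) V" unfolding vle_def vars_def Const_def by simp
lemma vle_1[simp]: "vle 1 V" using vle_Const[of 1 V] by simp
lemma vle_Var: "i \<in> V \<Longrightarrow> vle (Var i) V" unfolding vle_def vars_def Var_def by simp
lemma vle_mult: assumes "vle p V" "vle q V" shows "vle (p * q) V"
  unfolding vle_def vars_def
proof (intro subsetI, elim UnionE imageE)
  fix x X m assume x: "x \<in> X" "X = Poly_Mapping.keys m" and m: "m \<in> Poly_Mapping.keys (p*q)"
  then obtain a b where ab: "m = a+b" "a \<in> Poly_Mapping.keys p" "b \<in> Poly_Mapping.keys q"
    using keys_mult[of p q] by blast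
  then have "x \<in> Poly_Mapping.keys a \<union> Poly_Mapping.keys b" using keys_add[of a b] x by blast
  then show "x \<in> V" using assms ab unfolding vle_def vars_def by blast
qed
lemma vle_sum: "(\<And>i. i \<in> S \<Longrightarrow> vle (F i) V) \<Longrightarrow> vle (sum F S) V"
  by (induction S rule: infinite_finite_induct) (auto intro: vle_add)
lemma vle_prod: "(\<And>i. i \<in> S \<Longrightarrow> vle (F i) V) \<Longrightarrow> vle (prod F S) V"
  by (induction S rule: infinite_finite_induct) (auto intro: vle_mult)
lemma vle_power: "vle p V \<Longrightarrow> vle (p ^ k) V"
  by (induction k) (auto intro: vle_mult)



definition mon :: "(nat \<Rightarrow> mpoly) \<Rightarrow> (nat \<Rightarrow>\<^sub>0 nat) \<Rightarrow> mpoly" where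
  "mon f m = (\<Prod>i\<in>Poly_Mapping.keys m. f i ^ Poly_Mapping.lookup m i)"
definition ev :: "(nat \<Rightarrow> mpoly) \<Rightarrow> mpoly \<Rightarrow> mpoly" where
  "ev f p = (\<Sum>m\<in>Poly_Mapping.keys p. Const (Poly_Mapping.lookup p m) * mon f m)"

lemma mon_superset: "finite S \<Longrightarrow> Poly_Mapping.keys m \<subseteq> S \<Longrightarrow>
   mon f m = (\<Prod>i\<in>S. f i ^ Poly_Mapping.lookup m i)"
  unfolding mon_def by (rule prod.mono_neutral_left) (auto simp: in_keys_iff)

lemma mon_add: "mon f (a + b) = mon f a * mon f b"
proof -
  let ?S = "Poly_Mapping.keys a \<union> Poly_Mapping.keys b"
  have "mon f (a+b) = (\<Prod>i\<in>?S. f i ^ Poly_Mapping.lookup (a+b) i)"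
    by (rule mon_superset) (auto dest: keys_add[THEN subsetD])
  also have "\<dots> = (\<Prod>i\<in>?S. f i ^ Poly_Mapping.lookup a i) * (\<Prod>i\<in>?S. f i ^ Poly_Mapping.lookup b i)"
    by (simp add: lookup_add power_add prod.distrib)
  also have "\<dots> = mon f a * mon f b"
    using mon_superset[of ?S a f] mon_superset[of ?S b f] by simp
  finally show ?thesis .
qed

lemma mon_0[simp]: "mon f 0 = 1" by (simp add: mon_def)

lemma ev_add: "ev f (p + q) = ev f p + ev f q"
  unfolding ev_def
  by (rule setsum_keys_plus_distrib) (auto simp: Const_add distrib_right)

lemma ev_0[simp]: "ev f 0 = 0" by (simp add: ev_def)

lemma ev_sum: "ev f (sum F S) = (\<Sum>i\<in>S. ev f (F i))"
  by (induction S rule: infinite_finite_induct) (auto simp: ev_add)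

lemma ev_single: "ev f (Poly_Mapping.single m c) = Const c * mon f m"
  by (simp add: ev_def)

lemma poly_expand: "p = (\<Sum>m\<in>Poly_Mapping.keys p. Poly_Mapping.single m (Poly_Mapping.lookup p m))"
proof (rule poly_mapping_eqI)
  fix k
  show "Poly_Mapping.lookup p k = Poly_Mapping.lookup (\<Sum>m\<in>Poly_Mapping.keys p. Poly_Mapping.single m (Poly_Mapping.lookup p m)) k"
    by (cases "k \<in> Poly_Mapping.keys p") (auto simp: lookup_sum lookup_single when_def in_keys_iff)
qed

lemma ev_mult: "ev f (p * q) = ev f p * ev f q"
proof -
  let ?P = "Poly_Mapping.keys p" and ?Q = "Poly_Mapping.keys q"
  let ?lp = "Poly_Mapping.lookup p" and ?lq = "Poly_Mapping.lookup q"
  have "p * q = (\<Sum>a\<in>?P. Poly_Mapping.single a (?lp a)) * (\<Sum>b\<in>?Q. Poly_Mapping.single b (?lq b))"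
    using poly_expand[of p] poly_expand[of q] by simp
  also have "\<dots> = (\<Sum>a\<in>?P. \<Sum>b\<in>?Q. Poly_Mapping.single (a+b) (?lp a * ?lq b))"
    by (simp add: sum_product mult_single)
  finally have "ev f (p * q) = (\<Sum>a\<in>?P. \<Sum>b\<in>?Q. Const (?lp a * ?lq b) * mon f (a+b))"
    by (simp add: ev_sum ev_single)
  also have "\<dots> = (\<Sum>a\<in>?P. \<Sum>b\<in>?Q. (Const (?lp a) * mon f a) * (Const (?lq b) * mon f b))"
    by (simp add: mon_add Const_mult[symmetric] ac_simps)
  also have "\<dots> = ev f p * ev f q"
    by (simp add: ev_def sum_product)
  finally show ?thesis .
qed

lemma ev_Const[simp]: "ev f (Const c) = Const c"
  by (simp add: Const_def ev_single)

lemma ev_1[simp]: "ev f 1 = 1"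
  using ev_Const[of f 1] by simp

lemma ev_uminus: "ev f (- p) = - ev f p"
proof -
  have "ev f p + ev f (-p) = 0" using ev_add[of f p "-p"] by simp
  then show ?thesis by (simp add: add_eq_0_iff)
qed

lemma ev_diff: "ev f (p - q) = ev f p - ev f q"
  using ev_add[of f p "-q"] by (simp add: ev_uminus)

lemma ev_Var[simp]: "ev f (Var i) = f i"
  by (simp add: Var_def ev_single mon_def)

lemma ev_prod: "ev f (prod F S) = (\<Prod>i\<in>S. ev f (F i))"
  by (induction S rule: infinite_finite_induct) (auto simp: ev_mult)

lemma ev_power: "ev f (p ^ k) = ev f p ^ k"
  by (induction k) (auto simp: ev_mult)

lemma dle_mon: "(\<And>i. dle (f i) 1) \<Longrightarrow> dle (mon f m) (mdeg m)"
  unfolding mon_def mdeg_def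
  by (rule dle_prod) (metis dle_power mult.right_neutral)

lemma dle_ev: "(\<And>i. dle (f i) 1) \<Longrightarrow> dle p r \<Longrightarrow> dle (ev f p) r"
  unfolding ev_def
proof (rule dle_sum)
  fix m assume f: "\<And>i. dle (f i) 1" and p: "dle p r" and m: "m \<in> Poly_Mapping.keys p"
  have "dle (Const (Poly_Mapping.lookup p m) * mon f m) (0 + mdeg m)"
    by (rule dle_mult) (auto intro: dle_mon f)
  moreover have "mdeg m \<le> r" using p m by (auto simp: dle_def)
  ultimately show "dle (Const (Poly_Mapping.lookup p m) * mon f m) r"
    by (auto intro: dle_mono)
qed

lemma vle_ev: "(\<And>i. vle (f i) V) \<Longrightarrow> vle (ev f p) V"
  unfolding ev_def mon_def
  by (intro vle_sum vle_mult vle_prod vle_power) auto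

lemma ev_sum_list_sq: "ev f (sum_list (map (\<lambda>q. q * q) qs)) = sum_list (map (\<lambda>q. q * q) (map (ev f) qs))"
  by (induction qs) (auto simp: ev_add ev_mult)

lemma sos_0: "0 \<in> sos V"
  unfolding sos_def by (rule CollectI, rule exI[of _ "[]"]) simp

lemma sos_add: "p \<in> sos V \<Longrightarrow> q \<in> sos V \<Longrightarrow> p + q \<in> sos V"
  unfolding sos_def
  by (auto, metis (no_types, lifting) Un_iff map_append set_append sum_list_append)

lemma sos_sum: "(\<And>i. i \<in> S \<Longrightarrow> F i \<in> sos V) \<Longrightarrow> sum F S \<in> sos V"
  by (induction S rule: infinite_finite_induct) (auto intro: sos_add sos_0)

lemma sos_ev: "p \<in> sos V \<Longrightarrow> (\<And>i. vle (f i) W) \<Longrightarrow> ev f p \<in> sos W"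
  unfolding sos_def
proof (clarify)
  fix qs assume "\<And>i. vle (f i) W"
  then have W: "\<And>q. vars (ev f q) \<subseteq> W" using vle_ev[of f W] unfolding vle_def by blast
  show "\<exists>qsa. ev f (sum_list (map (\<lambda>q. q * q) qs)) = sum_list (map (\<lambda>q. q * q) qsa) \<and> (\<forall>q\<in>set qsa. vars q \<subseteq> W)"
    by (intro exI[of _ "map (ev f) qs"]) (auto simp: ev_sum_list_sq W)
qed



lemma qmod_0: "finite I \<Longrightarrow> 0 \<in> qmod I g r"
  unfolding qmod_def
  by (rule CollectI, rule exI[of _ 0], rule exI[of _ "\<lambda>_. 0"]) (simp add: sos_0 tdeg_le_iff)

lemma qmod_mono: "p \<in> qmod I g r \<Longrightarrow> r \<le> s \<Longrightarrow> p \<in> qmod I g s"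
proof -
  assume p: "p \<in> qmod I g r" and rs: "r \<le> s"
  obtain s0 ss where s: "s0 \<in> sos I" "\<forall>i\<in>I. ss i \<in> sos I" "tdeg s0 \<le> r" "\<forall>i\<in>I. tdeg (ss i * g i) \<le> r"
     "p = s0 + (\<Sum>i\<in>I. ss i * g i)" using p unfolding qmod_def by blast
  have "tdeg s0 \<le> s" "\<forall>i\<in>I. tdeg (ss i * g i) \<le> s" using s(3,4) rs by auto
  then show ?thesis unfolding qmod_def using s(1,2,5) by blast
qed

lemma qmod_add: assumes "p \<in> qmod I g r" "q \<in> qmod I g r" shows "p + q \<in> qmod I g r"
proof -
  obtain s0 s where s: "s0 \<in> sos I" "\<forall>i\<in>I. s i \<in> sos I" "tdeg s0 \<le> r" "\<forall>i\<in>I. tdeg (s i * g i) \<le> r"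
     "p = s0 + (\<Sum>i\<in>I. s i * g i)" using assms(1) unfolding qmod_def by blast
  obtain t0 t where t: "t0 \<in> sos I" "\<forall>i\<in>I. t i \<in> sos I" "tdeg t0 \<le> r" "\<forall>i\<in>I. tdeg (t i * g i) \<le> r"
     "q = t0 + (\<Sum>i\<in>I. t i * g i)" using assms(2) unfolding qmod_def by blast
  have "p + q = (s0 + t0) + (\<Sum>i\<in>I. (s i + t i) * g i)"
  proof -
    have h: "(\<Sum>i\<in>I. (s i + t i) * g i) = (\<Sum>i\<in>I. s i * g i) + (\<Sum>i\<in>I. t i * g i)"
      by (simp add: distrib_right sum.distrib)
    show ?thesis unfolding h s(5) t(5) by (simp only: add_ac)
  qed
  moreover have "s0 + t0 \<in> sos I" using s t by (auto intro: sos_add)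
  moreover have "\<forall>i\<in>I. s i + t i \<in> sos I" using s t by (auto intro: sos_add)
  moreover have "tdeg (s0 + t0) \<le> r" using s t by (auto simp: tdeg_le_iff intro: dle_add)
  moreover have "\<forall>i\<in>I. tdeg ((s i + t i) * g i) \<le> r"
  proof
    fix i assume i: "i \<in> I"
    have "dle (s i * g i + t i * g i) r" using s(4) t(4) i by (intro dle_add) (auto simp: tdeg_le_iff)
    then show "tdeg ((s i + t i) * g i) \<le> r" by (simp add: tdeg_le_iff distrib_right)
  qed
  ultimately show ?thesis unfolding qmod_def by (intro CollectI exI conjI)
qed

lemma qmod_transport:
  assumes p: "p \<in> qmod J gbox r" and fJ: "finite J" and fI: "finite I"
    and fdeg: "\<And>i. dle (f i) 1" and fvar: "\<And>i. vle (f i) I"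
    and pi: "\<And>i. i \<in> J \<Longrightarrow> \<pi> i \<in> I \<and> ev f (gbox i) = gbox (\<pi> i)"
  shows "ev f p \<in> qmod I gbox r"
proof -
  obtain s0 s where s: "s0 \<in> sos J" "\<forall>i\<in>J. s i \<in> sos J" "tdeg s0 \<le> r" "\<forall>i\<in>J. tdeg (s i * gbox i) \<le> r"
     "p = s0 + (\<Sum>i\<in>J. s i * gbox i)" using p unfolding qmod_def by blast
  define t where "t l = (\<Sum>i\<in>{i. i \<in> J \<and> \<pi> i = l}. ev f (s i))" for l
  have "ev f p = ev f s0 + (\<Sum>i\<in>J. ev f (s i) * gbox (\<pi> i))"
    using s(5) pi by (simp add: ev_add ev_sum ev_mult)
  also have "(\<Sum>i\<in>J. ev f (s i) * gbox (\<pi> i)) = (\<Sum>l\<in>I. \<Sum>i\<in>{i. i \<in> J \<and> \<pi> i = l}. ev f (s i) * gbox (\<pi> i))"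
    by (rule sum.group[symmetric]) (use fJ fI pi in auto)
  also have "\<dots> = (\<Sum>l\<in>I. t l * gbox l)"
    unfolding t_def by (rule sum.cong) (auto simp: sum_distrib_right)
  finally have eq: "ev f p = ev f s0 + (\<Sum>l\<in>I. t l * gbox l)" .
  have "ev f s0 \<in> sos I" using s(1) fvar by (rule sos_ev)
  moreover have "\<forall>l\<in>I. t l \<in> sos I"
    unfolding t_def using s(2) fvar by (auto intro!: sos_sum sos_ev)
  moreover have "tdeg (ev f s0) \<le> r" using s(3) fdeg by (simp add: tdeg_le_iff dle_ev)
  moreover have "\<forall>l\<in>I. tdeg (t l * gbox l) \<le> r"
  proof
    fix l assume l: "l \<in> I"
    have "t l * gbox l = (\<Sum>i\<in>{i. i \<in> J \<and> \<pi> i = l}. ev f (s i * gbox i))"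
      unfolding t_def using pi by (simp add: sum_distrib_right ev_mult)
    moreover have "dle (\<Sum>i\<in>{i. i \<in> J \<and> \<pi> i = l}. ev f (s i * gbox i)) r"
      using s(4) fdeg by (intro dle_sum) (auto simp: tdeg_le_iff dle_ev)
    ultimately show "tdeg (t l * gbox l) \<le> r" by (simp add: tdeg_le_iff)
  qed
  ultimately show ?thesis unfolding qmod_def using eq by blast
qed



definition bf :: "nat \<times> bool \<Rightarrow> mpoly" where
  "bf y = (if snd y then Var (fst y) else 1 - Var (fst y))"

lemma bf_flip: "bf (fst y, \<not> snd y) = 1 - bf y"
  by (simp add: bf_def)

lemma dle_bf: "dle (bf y) 1"
  unfolding bf_def using dle_Var[of "fst y"] dle_diff[OF dle_1 dle_Var[of "fst y"]] by simp

lemma vle_bf: "fst y \<in> V \<Longrightarrow> vle (bf y) V"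
  by (simp add: bf_def vle_Var vle_diff)

lemma ev_gbox_bf: "ev f (gbox i) = f i * (1 - f i)"
  by (simp add: gbox_def ev_mult ev_diff)

lemma bf_gbox: "bf y * (1 - bf y) = gbox (fst y)"
  by (simp add: bf_def gbox_def algebra_simps)

lemma prod_list_nth1: "prod_list (map g xs) = (\<Prod>i\<in>{1..length xs}. g (xs ! (i - 1)))"
proof (induction xs rule: rev_induct)
  case (snoc x xs)
  have "(\<Prod>i\<in>{1..length (xs @ [x])}. g ((xs @ [x]) ! (i - 1)))
      = (\<Prod>i\<in>{1..length xs}. g ((xs @ [x]) ! (i - 1))) * g ((xs @ [x]) ! length xs)"
    by (simp add: prod.nat_ivl_Suc')
  also have "(\<Prod>i\<in>{1..length xs}. g ((xs @ [x]) ! (i - 1))) = (\<Prod>i\<in>{1..length xs}. g (xs ! (i - 1)))"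
    by (rule prod.cong) (auto simp: nth_append)
  finally show ?case using snoc by simp
qed simp

lemma box:
  fixes C :: "nat \<Rightarrow> real"
  assumes Cj: "\<forall>j\<ge>1. C j \<le> 1 \<and>
      (\<Prod>i\<in>{1..j}. Var i) + Const (C j) \<in> qmod {1..j} gbox (2 * nat \<lceil>real j / 2\<rceil>)"
    and ne: "zs \<noteq> []" and zs: "\<forall>y\<in>set zs. fst y \<in> {1..n}"
  shows "prod_list (map bf zs) + Const (C (length zs)) \<in> qmod {1..n} gbox (2 * nat \<lceil>real (length zs) / 2\<rceil>)"
proof -
  define j where "j = length zs"
  have j1: "j \<ge> 1" using ne by (simp add: j_def Suc_le_eq)
  define f where "f i = (if i \<in> {1..j} then bf (zs ! (i - 1)) else 0)" for i
  define \<pi> where "\<pi> i = fst (zs ! (i - 1))" for i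
  have mem: "i \<in> {1..j} \<Longrightarrow> zs ! (i - 1) \<in> set zs" for i
    by (auto simp: j_def)
  have H: "(\<Prod>i\<in>{1..j}. Var i) + Const (C j) \<in> qmod {1..j} gbox (2 * nat \<lceil>real j / 2\<rceil>)"
    using Cj j1 by blast
  have T: "ev f ((\<Prod>i\<in>{1..j}. Var i) + Const (C j)) \<in> qmod {1..n} gbox (2 * nat \<lceil>real j / 2\<rceil>)"
  proof (rule qmod_transport[OF H])
    show "dle (f i) 1" for i unfolding f_def using dle_bf dle_0 by presburger
    show "vle (f i) {1..n}" for i using zs mem by (auto simp: f_def intro!: vle_bf)
    show "\<pi> i \<in> {1..n} \<and> ev f (gbox i) = gbox (\<pi> i)" if "i \<in> {1..j}" for i
      using that zs mem[OF that] by (simp add: ev_gbox_bf f_def \<pi>_def bf_gbox)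
  qed auto
  have "ev f ((\<Prod>i\<in>{1..j}. Var i) + Const (C j)) = (\<Prod>i\<in>{1..j}. bf (zs ! (i - 1))) + Const (C j)"
    by (simp add: ev_add ev_prod f_def)
  also have "(\<Prod>i\<in>{1..j}. bf (zs ! (i - 1))) = prod_list (map bf zs)"
    by (simp add: prod_list_nth1 j_def)
  finally show ?thesis using T by (simp add: j_def)
qed

lemma ceil_mono2: "L \<le> L' \<Longrightarrow> 2 * nat \<lceil>real L / 2\<rceil> \<le> 2 * nat \<lceil>real L' / 2\<rceil>"
proof -
  assume "L \<le> L'"
  then have "real L / 2 \<le> real L' / 2" by simp
  then have "\<lceil>real L / 2\<rceil> \<le> \<lceil>real L' / 2\<rceil>" by (rule ceiling_mono)
  then have "nat \<lceil>real L / 2\<rceil> \<le> nat \<lceil>real L' / 2\<rceil>" by (rule nat_mono)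
  then show ?thesis by simp
qed

lemma main_list:
  fixes C :: "nat \<Rightarrow> real"
  assumes C1: "C 1 = 0"
    and Cj: "\<forall>j\<ge>1. C j \<le> 1 \<and>
      (\<Prod>i\<in>{1..j}. Var i) + Const (C j) \<in> qmod {1..j} gbox (2 * nat \<lceil>real j / 2\<rceil>)"
  shows "(\<forall>y\<in>set ys. fst y \<in> {1..n}) \<Longrightarrow>
    1 - prod_list (map bf ys) + Const (\<Sum>j\<in>{1..length ys}. C j) \<in> qmod {1..n} gbox (2 * nat \<lceil>real (length ys) / 2\<rceil>)"
proof (induction ys)
  case Nil
  then show ?case by (simp add: qmod_0)
next
  case (Cons y ys)
  let ?L = "length ys"
  let ?P = "prod_list (map bf ys)"
  have A: "1 - ?P + Const (\<Sum>j\<in>{1..?L}. C j) \<in> qmod {1..n} gbox (2 * nat \<lceil>real (Suc ?L) / 2\<rceil>)"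
  proof -
    have IH: "1 - ?P + Const (\<Sum>j\<in>{1..?L}. C j) \<in> qmod {1..n} gbox (2 * nat \<lceil>real ?L / 2\<rceil>)"
      using Cons.IH Cons.prems by simp
    have "2 * nat \<lceil>real ?L / 2\<rceil> \<le> 2 * nat \<lceil>real (Suc ?L) / 2\<rceil>" by (rule ceil_mono2) simp
    from qmod_mono[OF IH this] show ?thesis .
  qed
  have ne: "(fst y, \<not> snd y) # ys \<noteq> []" by simp
  have pr: "\<forall>z\<in>set ((fst y, \<not> snd y) # ys). fst z \<in> {1..n}" using Cons.prems by simp
  from box[OF Cj ne pr] have B: "prod_list (map bf ((fst y, \<not> snd y) # ys)) + Const (C (Suc ?L))
     \<in> qmod {1..n} gbox (2 * nat \<lceil>real (Suc ?L) / 2\<rceil>)" by (simp only: length_Cons)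
  have "1 - prod_list (map bf (y # ys)) + Const (\<Sum>j\<in>{1..length (y # ys)}. C j)
     = (1 - ?P + Const (\<Sum>j\<in>{1..?L}. C j)) + (prod_list (map bf ((fst y, \<not> snd y) # ys)) + Const (C (Suc ?L)))"
    by (simp add: bf_flip Const_add algebra_simps)
  moreover have "length (y # ys) = Suc ?L" by simp
  ultimately show ?case using qmod_add[OF A B] by (simp only:)
qed



lemma concat_facts:
  "distinct xs \<Longrightarrow> length (concat (map G xs)) = (\<Sum>i\<in>set xs. length (G i)) \<and>
     prod_list (map bf (concat (map G xs))) = (\<Prod>i\<in>set xs. prod_list (map bf (G i)))"
  by (induction xs) auto

theorem lemma3:
  fixes n :: nat and h k :: "nat \<Rightarrow> nat" and C :: "nat \<Rightarrow> real"
  assumes C1: "C 1 = 0"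
    and Cj: "\<forall>j\<ge>1. C j \<le> 1 \<and>
      (\<Prod>i\<in>{1..j}. Var i) + Const (C j) \<in> qmod {1..j} gbox (2 * nat \<lceil>real j / 2\<rceil>)"
  shows "let t = (\<Sum>i\<in>{1..n}. h i + k i) in
    1 - (\<Prod>i\<in>{1..n}. Var i ^ h i * (1 - Var i) ^ k i) + Const (\<Sum>j\<in>{1..t}. C j)
      \<in> qmod {1..n} gbox (2 * nat \<lceil>real t / 2\<rceil>)"
proof -
  define G where "G i = replicate (h i) (i, True) @ replicate (k i) (i, False)" for i
  define ys where "ys = concat (map G [1..<Suc n])"
  have S: "set [1..<Suc n] = {1..n}" by auto
  have cf: "length ys = (\<Sum>i\<in>{1..n}. length (G i))"
     "prod_list (map bf ys) = (\<Prod>i\<in>{1..n}. prod_list (map bf (G i)))"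
    using concat_facts[of "[1..<Suc n]" G] unfolding ys_def S by auto
  have len: "length ys = (\<Sum>i\<in>{1..n}. h i + k i)"
    unfolding cf by (simp add: G_def)
  have pr: "prod_list (map bf ys) = (\<Prod>i\<in>{1..n}. Var i ^ h i * (1 - Var i) ^ k i)"
    unfolding cf by (simp add: G_def bf_def)
  have set: "\<forall>y\<in>set ys. fst y \<in> {1..n}" by (auto simp: ys_def G_def)
  from main_list[OF C1 Cj set] show ?thesis unfolding len pr Let_def .
qed

end
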